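(* Let $G=A\oplus B$ be an abelian group with $\mathrm{Hom}(B,A)=\{0\}$. Then $G$ is uniformly strongly co-Hopfian if and only if both $A$ and $B$ are uniformly strongly co-Hopfian. Moreover, if $m$ is an Sco-H bound for $A$ and $n$ is an Sco-H bound for $B$, then $m+n$ is an Sco-H bound for $G$.
   Context: All groups are abelian. A group $G$ is uniformly strongly co-Hopfian if there is a fixed $m\in\mathbb N$ such that $\phi^m(G)=\phi^{m+1}(G)$ for every endomorphism $\phi$ of $G$; such an $m$ is called an Sco-H bound for $G$. *)

theory Defs
  imports Main "HOL-Library.Product_Plus"
begin

definition is_hom :: "('a::ab_group_add \<Rightarrow> 'b::ab_group_add) \<Rightarrow> bool" where
  "is_hom f \<longleftrightarrow> (\<forall>x y. f (x + y) = f x + f y)"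

definition ScoH_bound :: "'a::ab_group_add itself \<Rightarrow> nat \<Rightarrow> bool" where
  "ScoH_bound _ m \<longleftrightarrow>
     (\<forall>\<phi>::'a \<Rightarrow> 'a. is_hom \<phi> \<longrightarrow> range (\<phi> ^^ m) = range (\<phi> ^^ Suc m))"

definition unif_strongly_coHopfian :: "'a::ab_group_add itself \<Rightarrow> bool" where
  "unif_strongly_coHopfian T \<longleftrightarrow> (\<exists>m. ScoH_bound T m)"

end

theory Submission
  imports Defs
begin

lemma hom_zero: "is_hom f \<Longrightarrow> f 0 = 0"
  unfolding is_hom_def by (metis add_cancel_left_left add_0)

lemma hom_pow: fixes f :: "'a::ab_group_add \<Rightarrow> 'a" shows "is_hom f \<Longrightarrow> is_hom (f ^^ k)"
  by (induction k) (auto simp: is_hom_def)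

lemma range_pow_Suc_sub: fixes f :: "'a \<Rightarrow> 'a" shows "range (f ^^ Suc k) \<subseteq> range (f ^^ k)"
proof
  fix y assume "y \<in> range (f ^^ Suc k)"
  then obtain x where "y = (f ^^ Suc k) x" by auto
  then have "y = (f ^^ k) (f x)" by (metis funpow_Suc_right comp_apply)
  then show "y \<in> range (f ^^ k)" by simp
qed

lemma stab:
  fixes f :: "'a \<Rightarrow> 'a"
  assumes "range (f ^^ n) = range (f ^^ Suc n)"
  shows "range (f ^^ n) \<subseteq> range (f ^^ (j + n))"
proof (induction j)
  case 0 then show ?case by simp
next
  case (Suc j)
  have "range (f ^^ (Suc j + n)) = (f ^^ j) ` range (f ^^ Suc n)"
    by (simp only: add_Suc_shift funpow_add image_comp range_composition)
  also have "\<dots> = (f ^^ j) ` range (f ^^ n)" using assms by simp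
  also have "\<dots> = range (f ^^ (j + n))"
    by (simp only: funpow_add image_comp range_composition)
  finally show ?case using Suc by simp
qed

lemma pow1: fixes \<alpha> :: "'a \<Rightarrow> 'a" and p :: "'a \<times> 'b" shows "((\<lambda>p. (\<alpha> (fst p), snd p)) ^^ k) p = ((\<alpha> ^^ k) (fst p), snd p)"
  by (induction k arbitrary: p) simp_all

lemma pow2: fixes \<alpha> :: "'b \<Rightarrow> 'b" and p :: "'a \<times> 'b" shows "((\<lambda>p. (fst p, \<alpha> (snd p))) ^^ k) p = (fst p, (\<alpha> ^^ k) (snd p))"
  by (induction k arbitrary: p) simp_all

lemma dir1a:
  assumes "ScoH_bound TYPE('a::ab_group_add \<times> 'b::ab_group_add) k"
  shows "ScoH_bound TYPE('a) k"
  unfolding ScoH_bound_def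
proof (intro allI impI)
  fix \<alpha> :: "'a \<Rightarrow> 'a" assume h: "is_hom \<alpha>"
  define \<phi> where "\<phi> = (\<lambda>p::'a\<times>'b. (\<alpha> (fst p), snd p))"
  have "is_hom \<phi>" using h by (auto simp: is_hom_def \<phi>_def)
  then have eq: "range (\<phi> ^^ k) = range (\<phi> ^^ Suc k)" using assms by (simp add: ScoH_bound_def)
  have "range (\<alpha> ^^ k) \<subseteq> range (\<alpha> ^^ Suc k)"
  proof
    fix x assume "x \<in> range (\<alpha> ^^ k)"
    then obtain a where a: "x = (\<alpha> ^^ k) a" by auto
    have "(x, 0::'b) = (\<phi> ^^ k) (a, 0)" unfolding \<phi>_def pow1 using a by simp
    then have "(x, 0::'b) \<in> range (\<phi> ^^ k)" by (simp only: rangeI)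
    then have "(x, 0::'b) \<in> range (\<phi> ^^ Suc k)" by (simp only: eq)
    then obtain q where "(x, 0::'b) = (\<phi> ^^ Suc k) q" by auto
    then have "x = (\<alpha> ^^ Suc k) (fst q)" unfolding \<phi>_def pow1 by simp
    then show "x \<in> range (\<alpha> ^^ Suc k)" by simp
  qed
  then show "range (\<alpha> ^^ k) = range (\<alpha> ^^ Suc k)" using range_pow_Suc_sub[where f=\<alpha> and k=k] by (rule equalityI)
qed

lemma dir1b:
  assumes "ScoH_bound TYPE('a::ab_group_add \<times> 'b::ab_group_add) k"
  shows "ScoH_bound TYPE('b) k"
  unfolding ScoH_bound_def
proof (intro allI impI)
  fix \<alpha> :: "'b \<Rightarrow> 'b" assume h: "is_hom \<alpha>"
  define \<phi> where "\<phi> = (\<lambda>p::'a\<times>'b. (fst p, \<alpha> (snd p)))"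
  have "is_hom \<phi>" using h by (auto simp: is_hom_def \<phi>_def)
  then have eq: "range (\<phi> ^^ k) = range (\<phi> ^^ Suc k)" using assms by (simp add: ScoH_bound_def)
  have "range (\<alpha> ^^ k) \<subseteq> range (\<alpha> ^^ Suc k)"
  proof
    fix x assume "x \<in> range (\<alpha> ^^ k)"
    then obtain a where a: "x = (\<alpha> ^^ k) a" by auto
    have "(0::'a, x) = (\<phi> ^^ k) (0, a)" unfolding \<phi>_def pow2 using a by simp
    then have "(0::'a, x) \<in> range (\<phi> ^^ k)" by (simp only: rangeI)
    then have "(0::'a, x) \<in> range (\<phi> ^^ Suc k)" by (simp only: eq)
    then obtain q where "(0::'a, x) = (\<phi> ^^ Suc k) q" by auto
    then have "x = (\<alpha> ^^ Suc k) (snd q)" unfolding \<phi>_def pow2 by simp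
    then show "x \<in> range (\<alpha> ^^ Suc k)" by simp
  qed
  then show "range (\<alpha> ^^ k) = range (\<alpha> ^^ Suc k)" using range_pow_Suc_sub[where f=\<alpha> and k=k] by (rule equalityI)
qed

lemma dir2:
  assumes H: "\<forall>h :: 'b::ab_group_add \<Rightarrow> 'a::ab_group_add. is_hom h \<longrightarrow> h = (\<lambda>_. 0)"
    and A: "ScoH_bound TYPE('a) m" and B: "ScoH_bound TYPE('b) n"
  shows "ScoH_bound TYPE('a \<times> 'b) (m + n)"
  unfolding ScoH_bound_def
proof (intro allI impI)
  fix \<phi> :: "'a \<times> 'b \<Rightarrow> 'a \<times> 'b" assume h: "is_hom \<phi>"
  define \<alpha> where "\<alpha> = (\<lambda>a. fst (\<phi> (a, 0)))"
  define \<delta> where "\<delta> = (\<lambda>b. snd (\<phi> (0, b)))"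
  have hadd: "\<phi> (x + y) = \<phi> x + \<phi> y" for x y using h unfolding is_hom_def by blast
  have hf: "is_hom (\<lambda>c::'b. fst (\<phi> (0, c)))"
    unfolding is_hom_def
  proof (intro allI)
    fix x y :: 'b
    have "\<phi> (0, x + y) = \<phi> (0,x) + \<phi> (0,y)" using hadd[of "(0,x)" "(0,y)"] by simp
    then show "fst (\<phi> (0, x + y)) = fst (\<phi> (0, x)) + fst (\<phi> (0, y))" by simp
  qed
  have f00: "(\<lambda>c::'b. fst (\<phi> (0, c))) = (\<lambda>_. 0)" using H hf by blast
  have f0: "fst (\<phi> (0, c)) = 0" for c using fun_cong[OF f00, of c] by simp
  have ha: "is_hom \<alpha>" unfolding is_hom_def \<alpha>_def
  proof (intro allI)
    fix x y :: 'a
    have "\<phi> (x + y, 0) = \<phi> (x,0) + \<phi> (y,0)" using hadd[of "(x,0)" "(y,0)"] by simp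
    then show "fst (\<phi> (x + y, 0)) = fst (\<phi> (x, 0)) + fst (\<phi> (y, 0))" by simp
  qed
  have hd: "is_hom \<delta>" unfolding is_hom_def \<delta>_def
  proof (intro allI)
    fix x y :: 'b
    have "\<phi> (0, x + y) = \<phi> (0,x) + \<phi> (0,y)" using hadd[of "(0,x)" "(0,y)"] by simp
    then show "snd (\<phi> (0, x + y)) = snd (\<phi> (0, x)) + snd (\<phi> (0, y))" by simp
  qed
  have P0: "\<phi> (0, c) = (0, \<delta> c)" for c using f0[of c] unfolding \<delta>_def by (simp add: prod_eq_iff)
  have Pk: "(\<phi> ^^ k) (0, c) = (0, (\<delta> ^^ k) c)" for k c
    by (induction k) (simp_all add: P0)
  have F: "fst (\<phi> p) = \<alpha> (fst p)" for p
  proof -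
    have "\<phi> p = \<phi> (fst p, 0) + \<phi> (0, snd p)" using hadd[of "(fst p, 0)" "(0, snd p)"] by simp
    then show ?thesis by (simp add: \<alpha>_def P0)
  qed
  have Fk: "fst ((\<phi> ^^ k) p) = (\<alpha> ^^ k) (fst p)" for k p
    by (induction k) (simp_all add: F)
  have hk: "is_hom (\<phi> ^^ k)" for k using hom_pow[OF h] .
  have Am: "range (\<alpha> ^^ m) = range (\<alpha> ^^ Suc m)" using A ha by (simp add: ScoH_bound_def)
  have Bn: "range (\<delta> ^^ n) = range (\<delta> ^^ Suc n)" using B hd by (simp add: ScoH_bound_def)
  have "range (\<phi> ^^ (m + n)) \<subseteq> range (\<phi> ^^ Suc (m + n))"
  proof
    fix x assume "x \<in> range (\<phi> ^^ (m + n))"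
    then obtain g where g: "x = (\<phi> ^^ (m + n)) g" by auto
    have "(\<alpha> ^^ m) (fst g) \<in> range (\<alpha> ^^ Suc m)" using Am by (metis rangeI)
    then obtain a' where a': "(\<alpha> ^^ m) (fst g) = (\<alpha> ^^ Suc m) a'" by auto
    define c where "c = snd ((\<phi> ^^ m) g - (\<phi> ^^ Suc m) (a', 0))"
    have e1: "(\<phi> ^^ m) g - (\<phi> ^^ Suc m) (a', 0) = (0, c)"
      unfolding c_def by (simp only: prod_eq_iff fst_diff Fk a') simp
    have "(\<delta> ^^ n) c \<in> range (\<delta> ^^ (Suc m + n))" using stab[OF Bn, of "Suc m"] by auto
    then obtain c' where c': "(\<delta> ^^ n) c = (\<delta> ^^ (Suc m + n)) c'" by auto
    have e2: "(\<phi> ^^ m) g = (\<phi> ^^ Suc m) (a', 0) + (0, c)" using e1 by (simp add: algebra_simps)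
    have "x = (\<phi> ^^ n) ((\<phi> ^^ m) g)" using g by (simp add: funpow_add add.commute[of m n])
    also have "\<dots> = (\<phi> ^^ n) ((\<phi> ^^ Suc m) (a', 0)) + (\<phi> ^^ n) (0, c)"
      by (simp only: e2 hk[of n, unfolded is_hom_def, rule_format])
    also have "\<dots> = (\<phi> ^^ Suc (m + n)) (a', 0) + (\<phi> ^^ Suc (m + n)) (0, c')"
    proof -
      have nm: "n + Suc m = Suc (m + n)" by simp
      have 1: "(\<phi> ^^ n) ((\<phi> ^^ Suc m) z) = (\<phi> ^^ Suc (m + n)) z" for z
        by (simp only: nm[symmetric] funpow_add comp_apply)
      have 2: "(\<phi> ^^ n) (0, c) = (\<phi> ^^ Suc (m + n)) (0, c')"
        by (simp only: Pk c' nm[symmetric] add.commute[of "Suc m" n])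
      show ?thesis by (simp only: 1 2)
    qed
    also have "\<dots> = (\<phi> ^^ Suc (m + n)) ((a', 0) + (0, c'))"
      by (simp only: hk[of "Suc (m+n)", unfolded is_hom_def, rule_format])
    finally show "x \<in> range (\<phi> ^^ Suc (m + n))" by simp
  qed
  then show "range (\<phi> ^^ (m + n)) = range (\<phi> ^^ Suc (m + n))"
    using range_pow_Suc_sub[where f=\<phi> and k="m + n"] by (rule equalityI)
qed

theorem mainTheorem9:
  assumes "\<forall>h :: 'b::ab_group_add \<Rightarrow> 'a::ab_group_add. is_hom h \<longrightarrow> h = (\<lambda>_. 0)"
  shows "(unif_strongly_coHopfian TYPE('a \<times> 'b) \<longleftrightarrow>
            unif_strongly_coHopfian TYPE('a) \<and> unif_strongly_coHopfian TYPE('b))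
         \<and> (\<forall>m n. ScoH_bound TYPE('a) m \<and> ScoH_bound TYPE('b) n
                   \<longrightarrow> ScoH_bound TYPE('a \<times> 'b) (m + n))"
  using dir1a dir1b dir2[OF assms] unfolding unif_strongly_coHopfian_def by blast

end
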